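(* Let $P$ be a finite poset and $Q$ a poset ideal of $P$. Then the following are equivalent: (1) $\tilde\chi(\{y\in Q\mid y<x\})=0$ for every $x\in(P\cup\{\infty\})\setminus Q$; (2) $\tilde\chi((-\infty,x)_P)=0$ for every $x\in(P\cup\{\infty\})\setminus Q$.
   Context: A poset ideal is a downward closed subset. $\infty$ (resp. $-\infty$) is a new element larger (resp. smaller) than all elements of $P$, and $(-\infty,x)_P=\{z\in P:z<x\}$. For a finite poset $S$, $\tilde\chi(S)=\sum_{\sigma}(-1)^{|\sigma|-1}$, the sum over all chains $\sigma$ of $S$ including the empty chain. *)

theory Defs
  imports Main
begin

definition finite_poset :: "'a set \<Rightarrow> ('a \<Rightarrow> 'a \<Rightarrow> bool) \<Rightarrow> bool" where
  "finite_poset P le \<longleftrightarrow> finite P \<and>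
     (\<forall>x\<in>P. le x x) \<and>
     (\<forall>x\<in>P. \<forall>y\<in>P. le x y \<and> le y x \<longrightarrow> x = y) \<and>
     (\<forall>x\<in>P. \<forall>y\<in>P. \<forall>z\<in>P. le x y \<and> le y z \<longrightarrow> le x z)"

definition poset_ideal :: "'a set \<Rightarrow> ('a \<Rightarrow> 'a \<Rightarrow> bool) \<Rightarrow> 'a set \<Rightarrow> bool" where
  "poset_ideal P le Q \<longleftrightarrow> Q \<subseteq> P \<and> (\<forall>x\<in>Q. \<forall>y\<in>P. le y x \<longrightarrow> y \<in> Q)"

definition chains_of :: "'a set \<Rightarrow> ('a \<Rightarrow> 'a \<Rightarrow> bool) \<Rightarrow> 'a set set" where
  "chains_of S le = {\<sigma>. \<sigma> \<subseteq> S \<and> (\<forall>x\<in>\<sigma>. \<forall>y\<in>\<sigma>. le x y \<or> le y x)}"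

text \<open>Reduced Euler characteristic: sum over chains of (-1)^(|sigma|-1),
  the empty chain contributing (-1)^(-1) = -1.\<close>
definition red_euler :: "'a set \<Rightarrow> ('a \<Rightarrow> 'a \<Rightarrow> bool) \<Rightarrow> int" where
  "red_euler S le = (\<Sum>\<sigma>\<in>chains_of S le. - ((-1) ^ card \<sigma>))"

text \<open>Strict order on P extended by a top element infinity = None.\<close>
fun ext_less :: "('a \<Rightarrow> 'a \<Rightarrow> bool) \<Rightarrow> 'a option \<Rightarrow> 'a option \<Rightarrow> bool" where
  "ext_less le (Some a) (Some b) = (le a b \<and> a \<noteq> b)"
| "ext_less le (Some a) None = True"
| "ext_less le None _ = False"

end

theory Submission
  imports Defs
begin

locale fpx =
  fixes P Q :: "'a set" and le :: "'a \<Rightarrow> 'a \<Rightarrow> bool"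
  assumes fpo: "finite_poset P le" and idl: "poset_ideal P le Q"
begin

lemmas fpc = fpo[unfolded finite_poset_def]
lemma finP: "finite P" using conjunct1[OF fpc] .
lemma refl: "x \<in> P \<Longrightarrow> le x x" using conjunct1[OF conjunct2[OF fpc]] by blast
lemma antisym: "x \<in> P \<Longrightarrow> y \<in> P \<Longrightarrow> le x y \<Longrightarrow> le y x \<Longrightarrow> x = y"
  using conjunct1[OF conjunct2[OF conjunct2[OF fpc]]] by blast
lemma trans: "x \<in> P \<Longrightarrow> y \<in> P \<Longrightarrow> z \<in> P \<Longrightarrow> le x y \<Longrightarrow> le y z \<Longrightarrow> le x z"
  using conjunct2[OF conjunct2[OF conjunct2[OF fpc]]] by blast
lemma QP: "Q \<subseteq> P" using idl by (simp add: poset_ideal_def)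
lemma down: "y \<in> Q \<Longrightarrow> z \<in> P \<Longrightarrow> le z y \<Longrightarrow> z \<in> Q"
  using idl by (simp add: poset_ideal_def)

definition okx :: "'a option \<Rightarrow> bool" where
  "okx x = (case x of None \<Rightarrow> True | Some p \<Rightarrow> p \<in> P)"

lemma ext_trans:
  assumes "z \<in> P" "m \<in> P" "okx x" "ext_less le (Some z) (Some m)" "ext_less le (Some m) x"
  shows "ext_less le (Some z) x"
proof (cases x)
  case None then show ?thesis by simp
next
  case (Some p)
  then have p: "p \<in> P" using assms(3) by (simp add: okx_def)
  have "le z m" "z \<noteq> m" "le m p" "m \<noteq> p" using assms(4,5) Some by auto
  have "le z p" using trans[OF assms(1,2) p] \<open>le z m\<close> \<open>le m p\<close> by blast
  moreover have "z \<noteq> p"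
  proof
    assume "z = p"
    then have "m = z" using antisym[OF assms(2,1)] \<open>le z m\<close> \<open>le m p\<close> by simp
    then show False using \<open>z \<noteq> m\<close> by simp
  qed
  ultimately show ?thesis using Some by simp
qed

lemma chain_min:
  assumes "finite S" "S \<noteq> {}" "S \<subseteq> P" "\<forall>a\<in>S. \<forall>b\<in>S. le a b \<or> le b a"
  shows "\<exists>m\<in>S. \<forall>z\<in>S. le m z"
  using assms
proof (induction S rule: finite_ne_induct)
  case (singleton x) then show ?case using refl by auto
next
  case (insert a F)
  then obtain m where m: "m \<in> F" "\<forall>z\<in>F. le m z" by auto
  show ?case
  proof (cases "le a m")
    case True
    then show ?thesis using m insert.prems trans refl by (metis insert_iff subset_iff)
  next
    case False
    then have "le m a" using insert.prems m by auto
    then show ?thesis using m by auto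
  qed
qed

definition w :: "'a set \<Rightarrow> int" where "w \<sigma> = - ((-1) ^ card \<sigma>)"

lemma re: "red_euler S le = sum w (chains_of S le)"
  by (simp add: red_euler_def w_def)

lemma fin_chains: "finite S \<Longrightarrow> finite (chains_of S le)"
  unfolding chains_of_def by (rule finite_subset[of _ "Pow S"]) auto

lemma decomp:
  assumes ok: "okx x"
  defines "D \<equiv> {z\<in>P. ext_less le (Some z) x}"
  defines "A \<equiv> \<lambda>m. {y\<in>Q. ext_less le (Some y) (Some m)}"
  defines "T \<equiv> \<lambda>m. {z \<in> D - Q. le m z \<and> m \<noteq> z}"
  shows "red_euler D le = red_euler (D \<inter> Q) le +
     (\<Sum>m\<in>D - Q. red_euler (A m) le * (\<Sum>\<tau>\<in>chains_of (T m) le. (-1) ^ (card \<tau> + 1)))"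
proof -
  have finD: "finite D" using finP by (simp add: D_def)
  have finA: "finite (A m)" for m using finP QP by (auto intro: finite_subset simp: A_def)
  have finT: "finite (T m)" for m using finD by (simp add: T_def)
  define S1 where "S1 = chains_of (D \<inter> Q) le"
  define S2 where "S2 = {\<sigma>\<in>chains_of D le. \<sigma> - Q \<noteq> {}}"
  have split: "chains_of D le = S1 \<union> S2" "S1 \<inter> S2 = {}"
    unfolding S1_def S2_def chains_of_def by auto
  have fS: "finite S1" "finite S2" using fin_chains[OF finD] split by auto
  have e1: "sum w (chains_of D le) = sum w S1 + sum w S2"
    using split fS by (simp add: sum.union_disjoint)
  define Sig where "Sig = (SIGMA m:D - Q. chains_of (T m) le \<times> chains_of (A m) le)"
  define h where "h = (\<lambda>(m::'a, (\<tau>::'a set, \<rho>::'a set)). \<rho> \<union> insert m \<tau>)"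
  have Tsub: "T m \<subseteq> P - Q" for m by (auto simp: T_def D_def)
  have Asub: "A m \<subseteq> Q" for m by (auto simp: A_def)
  have inj: "inj_on h Sig"
  proof (rule inj_onI)
    fix a b assume a: "a \<in> Sig" and b: "b \<in> Sig" and hab: "h a = h b"
    obtain m \<tau> \<rho> where aa: "a = (m, \<tau>, \<rho>)" by (cases a) auto
    obtain m' \<tau>' \<rho>' where bb: "b = (m', \<tau>', \<rho>')" by (cases b) auto
    have m: "m \<in> D - Q" "\<tau> \<subseteq> T m" "\<rho> \<subseteq> A m"
      using a aa by (auto simp: Sig_def chains_of_def)
    have m': "m' \<in> D - Q" "\<tau>' \<subseteq> T m'" "\<rho>' \<subseteq> A m'"
      using b bb by (auto simp: Sig_def chains_of_def)
    have eq: "\<rho> \<union> insert m \<tau> = \<rho>' \<union> insert m' \<tau>'" using hab aa bb by (simp add: h_def)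
    have q1: "(\<rho> \<union> insert m \<tau>) - Q = insert m \<tau>" using m Tsub Asub by blast
    have q2: "(\<rho>' \<union> insert m' \<tau>') - Q = insert m' \<tau>'" using m' Tsub Asub by blast
    have ins: "insert m \<tau> = insert m' \<tau>'" using eq q1 q2 by simp
    have "le m m'"
    proof (cases "m = m'")
      case True then show ?thesis using m refl by (auto simp: D_def)
    next
      case False then have "m' \<in> \<tau>" using ins by (metis insert_iff insertI1)
      then show ?thesis using m by (auto simp: T_def)
    qed
    moreover have "le m' m"
    proof (cases "m = m'")
      case True then show ?thesis using m refl by (auto simp: D_def)
    next
      case False then have "m \<in> \<tau>'" using ins by (metis insert_iff insertI1)
      then show ?thesis using m' by (auto simp: T_def)
    qed
    ultimately have mm: "m = m'" using antisym m m' by (auto simp: D_def)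
    have "m \<notin> \<tau>" "m' \<notin> \<tau>'" using m m' by (auto simp: T_def)
    then have tt: "\<tau> = \<tau>'" using ins mm by (metis Diff_insert_absorb)
    have "\<rho> = (\<rho> \<union> insert m \<tau>) \<inter> Q" using m Tsub Asub by blast
    moreover have "\<rho>' = (\<rho>' \<union> insert m' \<tau>') \<inter> Q" using m' Tsub Asub by blast
    ultimately have "\<rho> = \<rho>'" using eq by simp
    then show "a = b" using aa bb mm tt by simp
  qed
  have img: "h ` Sig = S2"
  proof
    show "h ` Sig \<subseteq> S2"
    proof
      fix s assume "s \<in> h ` Sig"
      then obtain m \<tau> \<rho> where s: "s = \<rho> \<union> insert m \<tau>" and mem: "(m, \<tau>, \<rho>) \<in> Sig"
        by (auto simp: h_def)
      have m: "m \<in> D - Q" and tc: "\<tau> \<in> chains_of (T m) le" and rc: "\<rho> \<in> chains_of (A m) le"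
        using mem by (auto simp: Sig_def)
      have mP: "m \<in> P" using m by (auto simp: D_def)
      have rD: "\<rho> \<subseteq> D"
      proof
        fix y assume "y \<in> \<rho>"
        then have y: "y \<in> Q" "ext_less le (Some y) (Some m)" using rc by (auto simp: chains_of_def A_def)
        then show "y \<in> D" using ext_trans[OF _ mP ok] m QP by (auto simp: D_def)
      qed
      have tD: "\<tau> \<subseteq> D" using tc by (auto simp: chains_of_def T_def)
      have rle: "y \<in> \<rho> \<Longrightarrow> le y m" for y using rc by (auto simp: chains_of_def A_def)
      have tle: "z \<in> \<tau> \<Longrightarrow> le m z" for z using tc by (auto simp: chains_of_def T_def)
      have rP: "\<rho> \<subseteq> P" using rD by (auto simp: D_def)
      have tP: "\<tau> \<subseteq> P" using tD by (auto simp: D_def)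
      have comp: "\<forall>a\<in>s. \<forall>b\<in>s. le a b \<or> le b a"
      proof (intro ballI)
        fix a b assume a: "a \<in> s" and b: "b \<in> s"
        have ca: "a \<in> \<rho> \<or> a = m \<or> a \<in> \<tau>" using a s by auto
        have cb: "b \<in> \<rho> \<or> b = m \<or> b \<in> \<tau>" using b s by auto
        have rr: "\<forall>a\<in>\<rho>. \<forall>b\<in>\<rho>. le a b \<or> le b a" using rc by (auto simp: chains_of_def)
        have tt: "\<forall>a\<in>\<tau>. \<forall>b\<in>\<tau>. le a b \<or> le b a" using tc by (auto simp: chains_of_def)
        have l1: "le a' b'" if "a' \<in> \<rho>" "b' \<in> insert m \<tau>" for a' b'
        proof (cases "b' = m")
          case True then show ?thesis using that rle by simp
        next
          case False
          then have "b' \<in> \<tau>" using that by simp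
          then show ?thesis using trans[of a' m b'] rle[OF that(1)] tle rP tP mP that(1) by blast
        qed
        show "le a b \<or> le b a"
          using ca cb rr tt l1 tle refl[OF mP] by blast
      qed
      have "s \<subseteq> D" using s rD tD m by auto
      moreover have "s - Q \<noteq> {}" using s m by auto
      ultimately show "s \<in> S2" using comp by (auto simp: S2_def chains_of_def)
    qed
  next
    show "S2 \<subseteq> h ` Sig"
    proof
      fix s assume s: "s \<in> S2"
      then have sD: "s \<subseteq> D" and comp: "\<forall>a\<in>s. \<forall>b\<in>s. le a b \<or> le b a" and ne: "s - Q \<noteq> {}"
        by (auto simp: S2_def chains_of_def)
      have sP: "s \<subseteq> P" using sD by (auto simp: D_def)
      have "finite (s - Q)" using sD finD by (auto intro: finite_subset)
      then obtain m where m: "m \<in> s - Q" "\<forall>z\<in>s - Q. le m z"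
        using chain_min[of "s - Q"] ne sP comp by blast
      define \<tau> where "\<tau> = s - Q - {m}"
      define \<rho> where "\<rho> = s \<inter> Q"
      have mDQ: "m \<in> D - Q" using m sD by auto
      have "\<tau> \<in> chains_of (T m) le" using m sD comp by (auto simp: T_def \<tau>_def chains_of_def)
      moreover have "\<rho> \<in> chains_of (A m) le"
      proof -
        have "y \<in> A m" if y: "y \<in> \<rho>" for y
        proof -
          have yQ: "y \<in> Q" and ys: "y \<in> s" using y by (auto simp: \<rho>_def)
          have "le y m \<or> le m y" using comp ys m by auto
          moreover have "\<not> le m y" using down[OF yQ] m sP by auto
          ultimately have "le y m" "y \<noteq> m" using m yQ by auto
          then show ?thesis using yQ by (simp add: A_def)
        qed
        then show ?thesis using comp by (auto simp: \<rho>_def chains_of_def)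
      qed
      ultimately have "(m, \<tau>, \<rho>) \<in> Sig" using mDQ by (auto simp: Sig_def)
      moreover have "s = h (m, \<tau>, \<rho>)" using m by (auto simp: h_def \<tau>_def \<rho>_def)
      ultimately show "s \<in> h ` Sig" by blast
    qed
  qed
  have e2: "sum w S2 = sum (w \<circ> h) Sig"
    using sum.reindex[OF inj] img by simp
  have wh: "w (h (m, \<tau>, \<rho>)) = w \<rho> * (-1) ^ (card \<tau> + 1)"
    if "m \<in> D - Q" "\<tau> \<in> chains_of (T m) le" "\<rho> \<in> chains_of (A m) le" for m \<tau> \<rho>
  proof -
    have sub: "\<tau> \<subseteq> T m" "\<rho> \<subseteq> A m" using that by (auto simp: chains_of_def)
    have ft: "finite \<tau>" "finite \<rho>" using sub finT finA by (auto intro: finite_subset)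
    have "m \<notin> \<tau>" using sub by (auto simp: T_def)
    then have c1: "card (insert m \<tau>) = card \<tau> + 1" using ft by simp
    have "\<rho> \<inter> insert m \<tau> = {}" using sub Tsub Asub that(1) by blast
    then have "card (\<rho> \<union> insert m \<tau>) = card \<rho> + card (insert m \<tau>)"
      using ft by (intro card_Un_disjoint) auto
    then have "card (\<rho> \<union> insert m \<tau>) = card \<rho> + (card \<tau> + 1)" using c1 by simp
    then show ?thesis by (simp add: h_def w_def power_add)
  qed
  have fSig: "finite (D - Q)" "\<forall>m\<in>D - Q. finite (chains_of (T m) le \<times> chains_of (A m) le)"
    using finD fin_chains[OF finT] fin_chains[OF finA] by auto
  have e3: "sum (w \<circ> h) Sig = (\<Sum>m\<in>D - Q. \<Sum>(\<tau>,\<rho>)\<in>chains_of (T m) le \<times> chains_of (A m) le. w (h (m, \<tau>, \<rho>)))"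
    unfolding Sig_def using sum.Sigma[OF fSig, of "\<lambda>m p. w (h (m, p))"]
    by (simp add: comp_def case_prod_beta')
  also have "\<dots> = (\<Sum>m\<in>D - Q. \<Sum>\<tau>\<in>chains_of (T m) le. \<Sum>\<rho>\<in>chains_of (A m) le. w \<rho> * (-1) ^ (card \<tau> + 1))"
  proof (rule sum.cong[OF HOL.refl])
    fix m assume m: "m \<in> D - Q"
    have "(\<Sum>(\<tau>,\<rho>)\<in>chains_of (T m) le \<times> chains_of (A m) le. w (h (m, \<tau>, \<rho>)))
       = (\<Sum>(\<tau>,\<rho>)\<in>chains_of (T m) le \<times> chains_of (A m) le. w \<rho> * (-1) ^ (card \<tau> + 1))"
      by (rule sum.cong[OF HOL.refl]) (use wh m in auto)
    also have "\<dots> = (\<Sum>\<tau>\<in>chains_of (T m) le. \<Sum>\<rho>\<in>chains_of (A m) le. w \<rho> * (-1) ^ (card \<tau> + 1))"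
      by (simp add: sum.cartesian_product)
    finally show "(\<Sum>(\<tau>,\<rho>)\<in>chains_of (T m) le \<times> chains_of (A m) le. w (h (m, \<tau>, \<rho>)))
       = (\<Sum>\<tau>\<in>chains_of (T m) le. \<Sum>\<rho>\<in>chains_of (A m) le. w \<rho> * (-1) ^ (card \<tau> + 1))" .
  qed
  also have "\<dots> = (\<Sum>m\<in>D - Q. red_euler (A m) le * (\<Sum>\<tau>\<in>chains_of (T m) le. (-1) ^ (card \<tau> + 1)))"
    by (simp add: re sum_distrib_left sum_distrib_right mult.commute)
  finally show ?thesis using e1 e2 by (simp add: re S1_def)
qed

end

theorem lemma6p10:
  fixes P Q :: "'a set" and le :: "'a \<Rightarrow> 'a \<Rightarrow> bool"
  assumes "finite_poset P le"
    and "poset_ideal P le Q"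
  shows "(\<forall>x \<in> (Some ` P \<union> {None}) - Some ` Q.
            red_euler {y \<in> Q. ext_less le (Some y) x} le = 0)
     \<longleftrightarrow> (\<forall>x \<in> (Some ` P \<union> {None}) - Some ` Q.
            red_euler {z \<in> P. ext_less le (Some z) x} le = 0)"
proof -
  interpret fpx P Q le using assms by (simp add: fpx_def)
  define I where "I = (Some ` P \<union> {None}) - Some ` Q"
  define A where "A = (\<lambda>x. {y \<in> Q. ext_less le (Some y) x})"
  define B where "B = (\<lambda>x. {z \<in> P. ext_less le (Some z) x})"
  have okI: "x \<in> I \<Longrightarrow> okx x" for x by (auto simp: I_def okx_def)
  have BQ: "B x \<inter> Q = A x" for x using QP by (auto simp: A_def B_def)
  have mI: "m \<in> B x - Q \<Longrightarrow> Some m \<in> I" for m x by (auto simp: I_def B_def)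
  have dec: "x \<in> I \<Longrightarrow> \<exists>c. red_euler (B x) le = red_euler (A x) le +
      (\<Sum>m\<in>B x - Q. red_euler (A (Some m)) le * c m)" for x
  proof -
    assume "x \<in> I"
    from decomp[OF okI[OF this]] BQ[of x]
    have "red_euler (B x) le = red_euler (A x) le +
      (\<Sum>m\<in>B x - Q. red_euler (A (Some m)) le * (\<Sum>\<tau>\<in>chains_of {z \<in> B x - Q. le m z \<and> m \<noteq> z} le. (-1) ^ (card \<tau> + 1)))"
      unfolding A_def B_def by simp
    then show ?thesis
      by (rule exI[of _ "\<lambda>m. (\<Sum>\<tau>\<in>chains_of {z \<in> B x - Q. le m z \<and> m \<noteq> z} le. (-1) ^ (card \<tau> + 1))"])
  qed
  have finB: "finite (B x)" for x using finP by (simp add: B_def)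
  show ?thesis
  proof
    assume H: "\<forall>x\<in>(Some ` P \<union> {None}) - Some ` Q. red_euler {y \<in> Q. ext_less le (Some y) x} le = 0"
    then have H': "x \<in> I \<Longrightarrow> red_euler (A x) le = 0" for x by (simp add: I_def A_def)
    show "\<forall>x\<in>(Some ` P \<union> {None}) - Some ` Q. red_euler {z \<in> P. ext_less le (Some z) x} le = 0"
    proof
      fix x assume x: "x \<in> (Some ` P \<union> {None}) - Some ` Q"
      then have xI: "x \<in> I" by (simp add: I_def)
      obtain c where "red_euler (B x) le = red_euler (A x) le +
          (\<Sum>m\<in>B x - Q. red_euler (A (Some m)) le * c m)" using dec[OF xI] by blast
      also have "\<dots> = 0"
      proof -
        have "\<forall>m\<in>B x - Q. red_euler (A (Some m)) le = 0" using H' mI by blast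
        then show ?thesis using H'[OF xI] by simp
      qed
      finally show "red_euler {z \<in> P. ext_less le (Some z) x} le = 0" by (simp add: B_def)
    qed
  next
    assume H: "\<forall>x\<in>(Some ` P \<union> {None}) - Some ` Q. red_euler {z \<in> P. ext_less le (Some z) x} le = 0"
    then have H': "x \<in> I \<Longrightarrow> red_euler (B x) le = 0" for x by (simp add: I_def B_def)
    have main: "\<forall>x. x \<in> I \<longrightarrow> card (B x) = n \<longrightarrow> red_euler (A x) le = 0" for n
    proof (induction n rule: less_induct)
      case (less n)
      show ?case
      proof (intro allI impI)
        fix x assume xI: "x \<in> I" and cn: "card (B x) = n"
        have sub: "m \<in> B x - Q \<Longrightarrow> card (B (Some m)) < n" for m
        proof -
          assume m: "m \<in> B x - Q"
          have "B (Some m) \<subset> B x"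
          proof
            show "B (Some m) \<subseteq> B x"
              using ext_trans[OF _ _ okI[OF xI]] m by (auto simp: B_def)
            show "B (Some m) \<noteq> B x" using m by (auto simp: B_def)
          qed
          then show ?thesis using cn finB psubset_card_mono by blast
        qed
        have z: "m \<in> B x - Q \<Longrightarrow> red_euler (A (Some m)) le = 0" for m
          using less.IH sub mI by blast
        obtain c where "red_euler (B x) le = red_euler (A x) le +
            (\<Sum>m\<in>B x - Q. red_euler (A (Some m)) le * c m)" using dec[OF xI] by blast
        then show "red_euler (A x) le = 0" using H'[OF xI] z by simp
      qed
    qed
    show "\<forall>x\<in>(Some ` P \<union> {None}) - Some ` Q. red_euler {y \<in> Q. ext_less le (Some y) x} le = 0"
      using main I_def A_def by blast
  qed
qed

end
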